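(* Let $U,V\in K_{\mathfrak{C}}$ with $U\cap V\neq\varnothing$. If $G\in\mathscr{K}(U)$ and $H\in\mathscr{K}(V)$, then $\langle G\cup H\rangle\in\mathscr{K}(U\cup V)$. If moreover $G$ and $H$ are finitely generated, then $\langle G\cup H\rangle$ is finitely generated (so lies in $\mathscr{K}^{\mathrm{f.g.}}(U\cup V)$).
   Context: $\mathfrak{C}$ denotes a Cantor space (a space homeomorphic to $\{0,1\}^\omega$). Groups of homeomorphisms act on the right. $K_{\mathfrak{C}}$ denotes the set of non-empty proper clopen subsets of $\mathfrak{C}$. For $\gamma\in\operatorname{Homeo}(\mathfrak{C})$, $\operatorname{supp}(\gamma)=\{p\in\mathfrak{C}: p\gamma\neq p\}$. For a non-empty $D\subseteq\mathfrak{C}$, a subgroup $G\le\operatorname{Homeo}(\mathfrak{C})$ is vigorous over $D$ if for every non-empty clopen $A\subseteq D$ and all non-empty proper clopen subsets $B,C$ of $A$ there is $\gamma\in G$ with $\operatorname{supp}(\gamma)\subseteq A$ and $B\gamma\subseteq C$. $\mathscr{K}(D)$ is the family of simple subgroups $G\le\operatorname{Homeo}(\mathfrak{C})$ such that $\operatorname{supp}(g)\subseteq D$ for all $g\in G$ and $G$ is vigorous over $D$; $\mathscr{K}^{\mathrm{f.g.}}(D)$ is the subfamily of finitely generated groups in $\mathscr{K}(D)$. *)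

theory Defs
  imports "HOL-Analysis.Analysis" "HOL-Algebra.Algebra"
begin

type_synonym cpt = "nat \<Rightarrow> bool"

definition cantor :: "cpt topology" where
  "cantor = product_topology (\<lambda>_. discrete_topology UNIV) UNIV"

definition clopen_c :: "cpt set \<Rightarrow> bool" where
  "clopen_c A \<longleftrightarrow> openin cantor A \<and> closedin cantor A"

definition K_C :: "cpt set set" where
  "K_C = {A. clopen_c A \<and> A \<noteq> {} \<and> A \<noteq> UNIV}"

definition Homeo :: "(cpt \<Rightarrow> cpt) set" where
  "Homeo = {f. homeomorphic_map cantor cantor f}"

text \<open>Right action: p(gh) = (pg)h, so the product g*h is the function h o g.\<close>
definition homeo_group :: "(cpt \<Rightarrow> cpt) monoid" where
  "homeo_group = \<lparr>carrier = Homeo, mult = (\<lambda>g h. h \<circ> g), one = id\<rparr>"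

definition supp :: "(cpt \<Rightarrow> cpt) \<Rightarrow> cpt set" where
  "supp g = {p. g p \<noteq> p}"

definition vigorous_over :: "cpt set \<Rightarrow> (cpt \<Rightarrow> cpt) set \<Rightarrow> bool" where
  "vigorous_over D G \<longleftrightarrow>
     (\<forall>A B C. clopen_c A \<and> A \<noteq> {} \<and> A \<subseteq> D \<and>
        clopen_c B \<and> B \<noteq> {} \<and> B \<subseteq> A \<and> B \<noteq> A \<and>
        clopen_c C \<and> C \<noteq> {} \<and> C \<subseteq> A \<and> C \<noteq> A
        \<longrightarrow> (\<exists>\<gamma>\<in>G. supp \<gamma> \<subseteq> A \<and> \<gamma> ` B \<subseteq> C))"

definition simple_homeo_subgroup :: "(cpt \<Rightarrow> cpt) set \<Rightarrow> bool" where
  "simple_homeo_subgroup G \<longleftrightarrow>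
     subgroup G homeo_group \<and> G \<noteq> {id} \<and>
     (\<forall>N. N \<lhd> (homeo_group\<lparr>carrier := G\<rparr>) \<longrightarrow> N = {id} \<or> N = G)"

definition fin_gen :: "(cpt \<Rightarrow> cpt) set \<Rightarrow> bool" where
  "fin_gen G \<longleftrightarrow> (\<exists>F. finite F \<and> F \<subseteq> G \<and> generate homeo_group F = G)"

definition KK :: "cpt set \<Rightarrow> (cpt \<Rightarrow> cpt) set set" where
  "KK D = {G. simple_homeo_subgroup G \<and> (\<forall>g\<in>G. supp g \<subseteq> D) \<and> vigorous_over D G}"

definition KK_fg :: "cpt set \<Rightarrow> (cpt \<Rightarrow> cpt) set set" where
  "KK_fg D = {G \<in> KK D. fin_gen G}"

end

theory Submission
  imports Defs
begin


abbreviation hinv :: "(cpt \<Rightarrow> cpt) \<Rightarrow> cpt \<Rightarrow> cpt" where "hinv f \<equiv> inv_into UNIV f"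

lemma top_c[simp]: "topspace cantor = UNIV"
  by (simp add: cantor_def)

lemma clopen_c_cyl: "clopen_c {x. x k = b}"
proof -
  have c: "continuous_map cantor (discrete_topology UNIV) (\<lambda>x. x k)"
    unfolding cantor_def by (rule continuous_map_product_projection) simp
  have "openin cantor {x \<in> topspace cantor. x k \<in> {b}}"
    by (rule openin_continuous_map_preimage[OF c]) simp
  moreover have "closedin cantor {x \<in> topspace cantor. x k \<in> {b}}"
    by (rule closedin_continuous_map_preimage[OF c]) simp
  ultimately show ?thesis by (simp add: clopen_c_def)
qed

lemma clopen_c_Int: "clopen_c A \<Longrightarrow> clopen_c B \<Longrightarrow> clopen_c (A \<inter> B)"
  by (auto simp: clopen_c_def)
lemma clopen_c_Un: "clopen_c A \<Longrightarrow> clopen_c B \<Longrightarrow> clopen_c (A \<union> B)"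
  by (auto simp: clopen_c_def)
lemma clopen_c_Diff: "clopen_c A \<Longrightarrow> clopen_c B \<Longrightarrow> clopen_c (A - B)"
  by (auto simp: clopen_c_def)
lemma clopen_c_UNIV: "clopen_c UNIV"
  by (metis clopen_c_def closedin_topspace openin_topspace top_c)

lemma homeo_bij: "f \<in> Homeo \<Longrightarrow> bij f"
  unfolding Homeo_def bij_def
  by (metis homeomorphic_eq_everything_map mem_Collect_eq top_c)

lemma clopen_c_image: "f \<in> Homeo \<Longrightarrow> clopen_c A \<Longrightarrow> clopen_c (f ` A)"
  unfolding clopen_c_def Homeo_def
  by (simp add: homeomorphic_map_openness homeomorphic_map_closedness)

lemma homeo_inv: "f \<in> Homeo \<Longrightarrow> hinv f \<in> Homeo"
proof -
  assume f: "f \<in> Homeo"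
  then obtain g where g: "homeomorphic_maps cantor cantor f g"
    unfolding Homeo_def by (auto simp: homeomorphic_map_maps)
  have gf: "\<And>x. g (f x) = x" "\<And>y. f (g y) = y" using g by (auto simp: homeomorphic_maps_def)
  hence "inj f" by (metis injI)
  have "g = hinv f"
    by (rule ext) (metis gf \<open>inj f\<close> inv_f_eq)
  thus ?thesis using g unfolding Homeo_def
    by (auto simp: homeomorphic_maps_map)
qed

lemma homeo_comp: "f \<in> Homeo \<Longrightarrow> g \<in> Homeo \<Longrightarrow> g \<circ> f \<in> Homeo"
  unfolding Homeo_def by (auto intro: homeomorphic_map_compose)

lemma homeo_id: "id \<in> Homeo"
  unfolding Homeo_def by (simp add: homeomorphic_map_id)

lemma clopen_c_preimage: "f \<in> Homeo \<Longrightarrow> clopen_c A \<Longrightarrow> clopen_c {x. f x \<in> A}"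
proof -
  assume f: "f \<in> Homeo" and A: "clopen_c A"
  have "{x. f x \<in> A} = hinv f ` A" using homeo_bij[OF f]
    by (auto simp: bij_def image_iff) (metis bij_inv_eq_iff homeo_bij[OF f])+
  thus ?thesis using clopen_c_image[OF homeo_inv[OF f] A] by simp
qed

lemma group_homeo: "group homeo_group"
proof (rule groupI)
  show "\<And>x y. x \<in> carrier homeo_group \<Longrightarrow> y \<in> carrier homeo_group \<Longrightarrow> x \<otimes>\<^bsub>homeo_group\<^esub> y \<in> carrier homeo_group"
    by (simp add: homeo_group_def homeo_comp)
  show "\<one>\<^bsub>homeo_group\<^esub> \<in> carrier homeo_group" by (simp add: homeo_group_def homeo_id)
  show "\<And>x y z. x \<in> carrier homeo_group \<Longrightarrow> y \<in> carrier homeo_group \<Longrightarrow> z \<in> carrier homeo_group \<Longrightarrow>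
           x \<otimes>\<^bsub>homeo_group\<^esub> y \<otimes>\<^bsub>homeo_group\<^esub> z = x \<otimes>\<^bsub>homeo_group\<^esub> (y \<otimes>\<^bsub>homeo_group\<^esub> z)"
    by (simp add: homeo_group_def comp_assoc)
  show "\<And>x. x \<in> carrier homeo_group \<Longrightarrow> \<one>\<^bsub>homeo_group\<^esub> \<otimes>\<^bsub>homeo_group\<^esub> x = x"
    by (simp add: homeo_group_def)
  show "\<And>x. x \<in> carrier homeo_group \<Longrightarrow> \<exists>y\<in>carrier homeo_group. y \<otimes>\<^bsub>homeo_group\<^esub> x = \<one>\<^bsub>homeo_group\<^esub>"
  proof -
    fix x assume "x \<in> carrier homeo_group"
    hence x: "x \<in> Homeo" by (simp add: homeo_group_def)
    show "\<exists>y\<in>carrier homeo_group. y \<otimes>\<^bsub>homeo_group\<^esub> x = \<one>\<^bsub>homeo_group\<^esub>"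
      using homeo_inv[OF x] homeo_bij[OF x]
      by (simp add: homeo_group_def) (metis bij_is_surj surj_iff)
  qed
qed

lemma homeo_m_inv: "f \<in> Homeo \<Longrightarrow> m_inv homeo_group f = hinv f"
proof -
  assume f: "f \<in> Homeo"
  interpret group homeo_group by (rule group_homeo)
  have "hinv f \<otimes>\<^bsub>homeo_group\<^esub> f = \<one>\<^bsub>homeo_group\<^esub>"
    using homeo_bij[OF f] by (simp add: homeo_group_def) (metis bij_is_surj surj_iff)
  moreover have "f \<in> carrier homeo_group" "hinv f \<in> carrier homeo_group"
    using f homeo_inv[OF f] by (simp_all add: homeo_group_def)
  ultimately show ?thesis by (rule inv_equality)
qed

lemma clopen_split:
  assumes W: "clopen_c W" "W \<noteq> {}"
  shows "\<exists>W1 W2. clopen_c W1 \<and> clopen_c W2 \<and> W1 \<noteq> {} \<and> W2 \<noteq> {} \<and> W1 \<inter> W2 = {} \<and> W1 \<union> W2 = W"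
proof -
  obtain x where x: "x \<in> W" using W by auto
  have "openin cantor W" using W by (simp add: clopen_c_def)
  then obtain U where U: "finite {i. U i \<noteq> UNIV}" "x \<in> Pi\<^sub>E UNIV U" "Pi\<^sub>E UNIV U \<subseteq> W"
    using x unfolding cantor_def openin_product_topology_alt by fastforce
  obtain m where m: "m \<notin> {i. U i \<noteq> UNIV}" using U(1) ex_new_if_finite infinite_UNIV_nat by blast
  define y where "y = x(m := \<not> x m)"
  have "y \<in> Pi\<^sub>E UNIV U" using U(2) m by (auto simp: y_def)
  hence y: "y \<in> W" using U(3) by auto
  have c1: "clopen_c (W \<inter> {z. z m = x m})" by (rule clopen_c_Int[OF W(1) clopen_c_cyl])
  have c2: "clopen_c (W - {z. z m = x m})" by (rule clopen_c_Diff[OF W(1) clopen_c_cyl])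
  have n1: "W \<inter> {z. z m = x m} \<noteq> {}" using x by blast
  have "y m \<noteq> x m" by (simp add: y_def)
  hence n2: "W - {z. z m = x m} \<noteq> {}" using y by blast
  have d: "(W \<inter> {z. z m = x m}) \<inter> (W - {z. z m = x m}) = {}" by blast
  have u: "(W \<inter> {z. z m = x m}) \<union> (W - {z. z m = x m}) = W" by blast
  show ?thesis
    by (rule exI[of _ "W \<inter> {z. z m = x m}"], rule exI[of _ "W - {z. z m = x m}"])
       (intro conjI c1 c2 n1 n2 d u)
qed

lemma separate:
  assumes n: "n \<in> Homeo" and p: "n p \<noteq> p" "p \<in> D" and D: "clopen_c D"
  shows "\<exists>W. clopen_c W \<and> p \<in> W \<and> W \<subseteq> D \<and> n ` W \<inter> W = {}"
proof -
  obtain k where k: "n p k \<noteq> p k" using p by auto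
  define W where "W = D \<inter> {x. x k = p k} \<inter> {x. n x \<in> {z. z k = n p k}}"
  have "clopen_c W" unfolding W_def
    using clopen_c_Int[OF clopen_c_Int[OF D clopen_c_cyl] clopen_c_preimage[OF n clopen_c_cyl]] .
  moreover have "n ` W \<inter> W = {}"
  proof (rule ccontr)
    assume "n ` W \<inter> W \<noteq> {}"
    then obtain w where "w \<in> W" "n w \<in> W" by auto
    thus False using k by (simp add: W_def)
  qed
  moreover have "p \<in> W" "W \<subseteq> D" using p by (auto simp: W_def)
  ultimately show ?thesis by (intro exI[of _ W] conjI)
qed



definition good :: "(cpt \<Rightarrow> cpt) set \<Rightarrow> cpt set \<Rightarrow> bool" where
  "good S A \<longleftrightarrow> (\<forall>B C. clopen_c B \<and> B \<noteq> {} \<and> B \<subseteq> A \<and> B \<noteq> A \<and>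
        clopen_c C \<and> C \<noteq> {} \<and> C \<subseteq> A \<and> C \<noteq> A \<longrightarrow> (\<exists>\<gamma>\<in>S. supp \<gamma> \<subseteq> A \<and> \<gamma> ` B \<subseteq> C))"

lemma goodD: "good S A \<Longrightarrow> clopen_c B \<Longrightarrow> B \<noteq> {} \<Longrightarrow> B \<subseteq> A \<Longrightarrow> B \<noteq> A \<Longrightarrow>
        clopen_c C \<Longrightarrow> C \<noteq> {} \<Longrightarrow> C \<subseteq> A \<Longrightarrow> C \<noteq> A \<Longrightarrow> \<exists>\<gamma>\<in>S. supp \<gamma> \<subseteq> A \<and> \<gamma> ` B \<subseteq> C"
  unfolding good_def by blast

lemma vigorous_good: "vigorous_over D S \<longleftrightarrow> (\<forall>A. clopen_c A \<and> A \<noteq> {} \<and> A \<subseteq> D \<longrightarrow> good S A)"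
  unfolding vigorous_over_def good_def by blast

lemma good_mono: "good S A \<Longrightarrow> S \<subseteq> T \<Longrightarrow> good T A"
  unfolding good_def by blast

lemma img_comp_sub: "f ` A \<subseteq> B \<Longrightarrow> g ` B \<subseteq> C \<Longrightarrow> (g \<circ> f) ` A \<subseteq> C"
  unfolding image_subset_iff comp_def by blast

lemma supp_comp: "supp (g \<circ> f) \<subseteq> supp f \<union> supp g"
  by (auto simp: supp_def)

lemma supp_fix: "supp \<gamma> \<subseteq> A \<Longrightarrow> x \<notin> A \<Longrightarrow> \<gamma> x = x"
  by (auto simp: supp_def)

lemma supp_id: "supp id = {}" by (simp add: supp_def)

lemma step:
  assumes "good S A1" "id \<in> S" "clopen_c Xs" "Xs \<inter> A1 \<noteq> A1"
    "clopen_c Tg" "Tg \<noteq> {}" "Tg \<subseteq> A1" "Tg \<noteq> A1" "clopen_c A1"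
  shows "\<exists>\<gamma>\<in>S. supp \<gamma> \<subseteq> A1 \<and> \<gamma> ` Xs \<subseteq> Tg \<union> (Xs - A1)"
proof (cases "Xs \<inter> A1 = {}")
  case True
  thus ?thesis using assms(2) by (intro bexI[of _ id]) (auto simp: supp_id)
next
  case False
  obtain \<gamma> where g: "\<gamma> \<in> S" "supp \<gamma> \<subseteq> A1" "\<gamma> ` (Xs \<inter> A1) \<subseteq> Tg"
    using goodD[OF assms(1) clopen_c_Int[OF assms(3) assms(9)] False Int_lower2 assms(4) assms(5,6,7,8)] by blast
  have "\<gamma> ` Xs \<subseteq> Tg \<union> (Xs - A1)"
  proof
    fix y assume "y \<in> \<gamma> ` Xs"
    then obtain x where x: "x \<in> Xs" "y = \<gamma> x" by auto
    show "y \<in> Tg \<union> (Xs - A1)"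
    proof (cases "x \<in> A1")
      case True thus ?thesis using g x by auto
    next
      case False thus ?thesis using supp_fix[OF g(2) False] x by auto
    qed
  qed
  thus ?thesis using g by blast
qed

lemma windows_aux:
  assumes S: "S \<subseteq> Homeo" "id \<in> S" "\<And>f g. f \<in> S \<Longrightarrow> g \<in> S \<Longrightarrow> g \<circ> f \<in> S"
    and A: "good S A1" "good S A2" "clopen_c A1" "clopen_c A2" "A1 \<inter> A2 \<noteq> {}"
    and B: "clopen_c B" "B \<noteq> {}" "B \<subseteq> A1 \<union> A2" "B \<noteq> A1 \<union> A2"
    and C: "clopen_c C" "C \<noteq> {}" "C \<subseteq> A1 \<union> A2" "C \<noteq> A1 \<union> A2"
    and z: "z \<in> A1" "z \<notin> B"
  shows "\<exists>\<gamma>\<in>S. supp \<gamma> \<subseteq> A1 \<union> A2 \<and> \<gamma> ` B \<subseteq> C"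
proof -
  obtain t t2 where t: "clopen_c t" "clopen_c t2" "t \<noteq> {}" "t2 \<noteq> {}" "t \<inter> t2 = {}" "t \<union> t2 = A1 \<inter> A2"
    using clopen_split[of "A1 \<inter> A2"] A clopen_c_Int by blast
  have tA1: "t \<subseteq> A1" using t(6) by blast
  have tA1': "t \<noteq> A1" using t(4,5,6) by blast
  have tA2: "t \<subseteq> A2" using t(6) by blast
  have tA2': "t \<noteq> A2" using t(4,5,6) by blast
  obtain \<gamma>1 where g1: "\<gamma>1 \<in> S" "supp \<gamma>1 \<subseteq> A1" "\<gamma>1 ` B \<subseteq> t \<union> (B - A1)"
  proof -
    have "B \<inter> A1 \<noteq> A1" using z by blast
    from step[OF A(1) S(2) B(1) this t(1) t(3) tA1 tA1' A(3)] show ?thesis using that by blast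
  qed
  define B1 where "B1 = \<gamma>1 ` B"
  have B1c: "clopen_c B1" unfolding B1_def using clopen_c_image[of \<gamma>1 B] g1(1) S(1) B(1) by blast
  have B1n: "B1 \<noteq> {}" unfolding B1_def using B(2) by simp
  have B1s: "B1 \<subseteq> t \<union> (B - A1)" unfolding B1_def using g1(3) .
  have B1a: "B1 \<subseteq> A2" using B1s tA2 B(3) by blast
  have "t2 \<subseteq> A2" "t2 \<inter> B1 = {}" "t2 \<subseteq> A1" using t(5,6) B1s by blast+
  hence B1b: "B1 \<noteq> A2" using t(4) by blast
  note B1 = B1c B1n B1a B1b
  show ?thesis
  proof (cases "C \<inter> A2 = {}")
    case True
    obtain \<gamma>2 where g2: "\<gamma>2 \<in> S" "supp \<gamma>2 \<subseteq> A2" "\<gamma>2 ` B1 \<subseteq> t \<union> (B1 - A2)"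
    proof -
      have "B1 \<inter> A2 \<noteq> A2" using B1a B1b by blast
      from step[OF A(2) S(2) B1(1) this t(1) t(3) tA2 tA2' A(4)] show ?thesis using that by blast
    qed
    have CA1a: "C \<subseteq> A1" using True C(3) by blast
    have "t \<inter> C = {}" using True tA2 by blast
    hence CA1b: "C \<noteq> A1" using tA1 t(3) by blast
    note CA1 = CA1a CA1b
    obtain \<gamma>3 where g3: "\<gamma>3 \<in> S" "supp \<gamma>3 \<subseteq> A1" "\<gamma>3 ` t \<subseteq> C"
      using goodD[OF A(1) t(1) t(3) tA1 tA1' C(1) C(2) CA1] by blast
    have "supp (\<gamma>3 \<circ> \<gamma>2 \<circ> \<gamma>1) \<subseteq> A1 \<union> A2"
      using supp_comp[of "\<gamma>3 \<circ> \<gamma>2" \<gamma>1] supp_comp[of \<gamma>3 \<gamma>2] g1 g2 g3 by blast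
    moreover have "(\<gamma>3 \<circ> \<gamma>2 \<circ> \<gamma>1) ` B \<subseteq> C"
    proof -
      have "\<gamma>2 ` B1 \<subseteq> t" using g2(3) B1a by blast
      hence h2: "(\<gamma>3 \<circ> \<gamma>2) ` B1 \<subseteq> C" using g3(3) by (rule img_comp_sub)
      have h1: "\<gamma>1 ` B \<subseteq> B1" unfolding B1_def by (rule subset_refl)
      show ?thesis by (rule img_comp_sub[OF h1 h2])
    qed
    moreover have "\<gamma>3 \<circ> \<gamma>2 \<circ> \<gamma>1 \<in> S" by (rule S(3)[OF g1(1) S(3)[OF g2(1) g3(1)]])
    ultimately show ?thesis by blast
  next
    case False
    show ?thesis
    proof (cases "A2 \<subseteq> C")
      case True
      thus ?thesis using g1 B1 unfolding B1_def by blast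
    next
      case F2: False
      obtain \<gamma>2 where g2: "\<gamma>2 \<in> S" "supp \<gamma>2 \<subseteq> A2" "\<gamma>2 ` B1 \<subseteq> C \<inter> A2"
        using goodD[OF A(2) B1 clopen_c_Int[OF C(1) A(4)] False Int_lower2] F2 by blast
      have "supp (\<gamma>2 \<circ> \<gamma>1) \<subseteq> A1 \<union> A2"
        using supp_comp[of \<gamma>2 \<gamma>1] g1 g2 by blast
      moreover have "(\<gamma>2 \<circ> \<gamma>1) ` B \<subseteq> C"
      proof -
        have "\<gamma>1 ` B \<subseteq> B1" unfolding B1_def by (rule subset_refl)
        moreover have "\<gamma>2 ` B1 \<subseteq> C" using g2(3) by blast
        ultimately show ?thesis by (rule img_comp_sub)
      qed
      moreover have "\<gamma>2 \<circ> \<gamma>1 \<in> S" by (rule S(3)[OF g1(1) g2(1)])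
      ultimately show ?thesis by blast
    qed
  qed
qed

lemma windows:
  assumes S: "S \<subseteq> Homeo" "id \<in> S" "\<And>f g. f \<in> S \<Longrightarrow> g \<in> S \<Longrightarrow> g \<circ> f \<in> S"
    and A: "good S A1" "good S A2" "clopen_c A1" "clopen_c A2" "A1 \<inter> A2 \<noteq> {}"
  shows "good S (A1 \<union> A2)"
  unfolding good_def
proof (intro allI impI)
  fix B C assume BC: "clopen_c B \<and> B \<noteq> {} \<and> B \<subseteq> A1 \<union> A2 \<and> B \<noteq> A1 \<union> A2 \<and>
           clopen_c C \<and> C \<noteq> {} \<and> C \<subseteq> A1 \<union> A2 \<and> C \<noteq> A1 \<union> A2"
  then obtain z where z: "z \<in> A1 \<union> A2" "z \<notin> B" by blast
  show "\<exists>\<gamma>\<in>S. supp \<gamma> \<subseteq> A1 \<union> A2 \<and> \<gamma> ` B \<subseteq> C"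
  proof (cases "z \<in> A1")
    case True
    thus ?thesis using windows_aux[OF S A, of B C z] BC z by blast
  next
    case False
    hence "z \<in> A2" using z by blast
    moreover have "A2 \<inter> A1 \<noteq> {}" using A by blast
    ultimately have "\<exists>\<gamma>\<in>S. supp \<gamma> \<subseteq> A2 \<union> A1 \<and> \<gamma> ` B \<subseteq> C"
      using windows_aux[OF S A(2) A(1) A(4) A(3), of B C z] BC z by (simp add: Un_commute)
    thus ?thesis by (simp add: Un_commute)
  qed
qed



lemma hg_mult[simp]: "x \<otimes>\<^bsub>homeo_group\<^esub> y = y \<circ> x"
  by (simp add: homeo_group_def)
lemma hgr_mult[simp]: "x \<otimes>\<^bsub>homeo_group\<lparr>carrier := K\<rparr>\<^esub> y = y \<circ> x"
  by (simp add: homeo_group_def)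
lemma hg_one[simp]: "\<one>\<^bsub>homeo_group\<^esub> = id"
  by (simp add: homeo_group_def)
lemma hgr_one[simp]: "\<one>\<^bsub>homeo_group\<lparr>carrier := K\<rparr>\<^esub> = id"
  by (simp add: homeo_group_def)
lemma hg_carrier[simp]: "carrier homeo_group = Homeo"
  by (simp add: homeo_group_def)

lemma sub_props:
  assumes "subgroup K homeo_group"
  shows "K \<subseteq> Homeo" "id \<in> K" "\<And>f g. f \<in> K \<Longrightarrow> g \<in> K \<Longrightarrow> g \<circ> f \<in> K"
    "\<And>f. f \<in> K \<Longrightarrow> hinv f \<in> K"
proof -
  show KH: "K \<subseteq> Homeo" using subgroup.subset[OF assms] by simp
  show "id \<in> K" using subgroup.one_closed[OF assms] by simp
  show "\<And>f g. f \<in> K \<Longrightarrow> g \<in> K \<Longrightarrow> g \<circ> f \<in> K"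
    using subgroup.m_closed[OF assms] by simp
  show "\<And>f. f \<in> K \<Longrightarrow> hinv f \<in> K"
  proof -
    fix f assume f: "f \<in> K"
    have "m_inv homeo_group f \<in> K" using subgroup.m_inv_closed[OF assms f] .
    thus "hinv f \<in> K" using homeo_m_inv[of f] f KH by auto
  qed
qed

lemma restr_inv:
  assumes "subgroup K homeo_group" "f \<in> K"
  shows "m_inv (homeo_group\<lparr>carrier := K\<rparr>) f = hinv f"
proof -
  have "m_inv (homeo_group\<lparr>carrier := K\<rparr>) f = m_inv homeo_group f"
    using group.m_inv_consistent[OF group_homeo assms] .
  also have "\<dots> = hinv f" using homeo_m_inv sub_props(1)[OF assms(1)] assms(2) by blast
  finally show ?thesis .
qed

lemma restr_sub_props:
  assumes K: "subgroup K homeo_group" and Xs: "subgroup Xs (homeo_group\<lparr>carrier := K\<rparr>)"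
  shows "Xs \<subseteq> K" "id \<in> Xs" "\<And>f g. f \<in> Xs \<Longrightarrow> g \<in> Xs \<Longrightarrow> g \<circ> f \<in> Xs"
    "\<And>f. f \<in> Xs \<Longrightarrow> hinv f \<in> Xs"
proof -
  show XK: "Xs \<subseteq> K" using subgroup.subset[OF Xs] by simp
  show "id \<in> Xs" using subgroup.one_closed[OF Xs] by simp
  show "\<And>f g. f \<in> Xs \<Longrightarrow> g \<in> Xs \<Longrightarrow> g \<circ> f \<in> Xs"
    using subgroup.m_closed[OF Xs] by simp
  show "\<And>f. f \<in> Xs \<Longrightarrow> hinv f \<in> Xs"
  proof -
    fix f assume f: "f \<in> Xs"
    have "m_inv (homeo_group\<lparr>carrier := K\<rparr>) f \<in> Xs" using subgroup.m_inv_closed[OF Xs f] .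
    thus "hinv f \<in> Xs" using restr_inv[OF K, of f] f XK by auto
  qed
qed

lemma restr_subgroup:
  assumes K: "subgroup K homeo_group" and XK: "Xs \<subseteq> K" and "id \<in> Xs"
    and c: "\<And>f g. f \<in> Xs \<Longrightarrow> g \<in> Xs \<Longrightarrow> g \<circ> f \<in> Xs" and i: "\<And>f. f \<in> Xs \<Longrightarrow> hinv f \<in> Xs"
  shows "subgroup Xs (homeo_group\<lparr>carrier := K\<rparr>)"
proof (rule subgroup.intro)
  show "Xs \<subseteq> carrier (homeo_group\<lparr>carrier := K\<rparr>)" using XK by simp
  show "\<And>x y. x \<in> Xs \<Longrightarrow> y \<in> Xs \<Longrightarrow> x \<otimes>\<^bsub>homeo_group\<lparr>carrier := K\<rparr>\<^esub> y \<in> Xs"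
    using c by simp
  show "\<one>\<^bsub>homeo_group\<lparr>carrier := K\<rparr>\<^esub> \<in> Xs" using assms(3) by simp
  show "\<And>x. x \<in> Xs \<Longrightarrow> inv\<^bsub>homeo_group\<lparr>carrier := K\<rparr>\<^esub> x \<in> Xs"
  proof -
    fix x assume x: "x \<in> Xs"
    show "inv\<^bsub>homeo_group\<lparr>carrier := K\<rparr>\<^esub> x \<in> Xs" using restr_inv[OF K, of x] x XK i by auto
  qed
qed

lemma restr_group: "subgroup K homeo_group \<Longrightarrow> group (homeo_group\<lparr>carrier := K\<rparr>)"
  by (rule subgroup.subgroup_is_group[OF _ group_homeo])

lemma normal_props:
  assumes K: "subgroup K homeo_group" and N: "N \<lhd> homeo_group\<lparr>carrier := K\<rparr>"
  shows "subgroup N (homeo_group\<lparr>carrier := K\<rparr>)"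
    "\<And>x h. x \<in> K \<Longrightarrow> h \<in> N \<Longrightarrow> hinv x \<circ> h \<circ> x \<in> N"
proof -
  have g: "group (homeo_group\<lparr>carrier := K\<rparr>)" by (rule restr_group[OF K])
  have *: "subgroup N (homeo_group\<lparr>carrier := K\<rparr>) \<and> (\<forall>x \<in> carrier (homeo_group\<lparr>carrier := K\<rparr>). \<forall>h \<in> N.
      x \<otimes>\<^bsub>homeo_group\<lparr>carrier := K\<rparr>\<^esub> h \<otimes>\<^bsub>homeo_group\<lparr>carrier := K\<rparr>\<^esub> (inv\<^bsub>homeo_group\<lparr>carrier := K\<rparr>\<^esub> x) \<in> N)"
    using group.normal_inv_iff[OF g] N by blast
  thus "subgroup N (homeo_group\<lparr>carrier := K\<rparr>)" by blast
  show "\<And>x h. x \<in> K \<Longrightarrow> h \<in> N \<Longrightarrow> hinv x \<circ> h \<circ> x \<in> N"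
  proof -
    fix x h assume x: "x \<in> K" and h: "h \<in> N"
    have "x \<otimes>\<^bsub>homeo_group\<lparr>carrier := K\<rparr>\<^esub> h \<otimes>\<^bsub>homeo_group\<lparr>carrier := K\<rparr>\<^esub> (inv\<^bsub>homeo_group\<lparr>carrier := K\<rparr>\<^esub> x) \<in> N"
      using * x h by simp
    thus "hinv x \<circ> h \<circ> x \<in> N" using restr_inv[OF K x] by (simp add: comp_assoc)
  qed
qed

lemma normal_intro:
  assumes K: "subgroup K homeo_group" and XK: "Xs \<subseteq> K" and "id \<in> Xs"
    and c: "\<And>f g. f \<in> Xs \<Longrightarrow> g \<in> Xs \<Longrightarrow> g \<circ> f \<in> Xs" and i: "\<And>f. f \<in> Xs \<Longrightarrow> hinv f \<in> Xs"
    and cj: "\<And>x h. x \<in> K \<Longrightarrow> h \<in> Xs \<Longrightarrow> hinv x \<circ> h \<circ> x \<in> Xs"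
  shows "Xs \<lhd> homeo_group\<lparr>carrier := K\<rparr>"
proof -
  have g: "group (homeo_group\<lparr>carrier := K\<rparr>)" by (rule restr_group[OF K])
  have s: "subgroup Xs (homeo_group\<lparr>carrier := K\<rparr>)" by (rule restr_subgroup[OF K XK assms(3) c i])
  have "\<forall>x \<in> carrier (homeo_group\<lparr>carrier := K\<rparr>). \<forall>h \<in> Xs.
      x \<otimes>\<^bsub>homeo_group\<lparr>carrier := K\<rparr>\<^esub> h \<otimes>\<^bsub>homeo_group\<lparr>carrier := K\<rparr>\<^esub> (inv\<^bsub>homeo_group\<lparr>carrier := K\<rparr>\<^esub> x) \<in> Xs"
  proof (intro ballI)
    fix x h assume x: "x \<in> carrier (homeo_group\<lparr>carrier := K\<rparr>)" and h: "h \<in> Xs"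
    have xK: "x \<in> K" using x by simp
    show "x \<otimes>\<^bsub>homeo_group\<lparr>carrier := K\<rparr>\<^esub> h \<otimes>\<^bsub>homeo_group\<lparr>carrier := K\<rparr>\<^esub> (inv\<^bsub>homeo_group\<lparr>carrier := K\<rparr>\<^esub> x) \<in> Xs"
      using cj[OF xK h] restr_inv[OF K xK] by (simp add: comp_assoc)
  qed
  thus ?thesis using group.normal_inv_iff[OF g] s by blast
qed

lemma gen_prop:
  assumes x: "x \<in> generate homeo_group Xs" and XH: "Xs \<subseteq> Homeo" and P1: "P id"
    and P2: "\<And>h. h \<in> Xs \<Longrightarrow> P h" and P3: "\<And>h. h \<in> Xs \<Longrightarrow> P (hinv h)"
    and P4: "\<And>f g. P f \<Longrightarrow> P g \<Longrightarrow> P (g \<circ> f)"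
  shows "P x"
  using x
proof induction
  case one thus ?case using P1 by (simp add: id_def)
next
  case (incl h) thus ?case using P2 by simp
next
  case (inv h) thus ?case using P3 homeo_m_inv XH by auto
next
  case (eng h1 h2)
  have "P (h2 \<circ> h1)" by (rule P4[OF eng(3) eng(4)])
  thus ?case by (simp only: hg_mult)
qed



lemma bij_supp_iff: "bij f \<Longrightarrow> supp f \<subseteq> P \<Longrightarrow> (f x \<in> P \<longleftrightarrow> x \<in> P)"
proof -
  assume b: "bij f" and s: "supp f \<subseteq> P"
  show ?thesis
  proof
    assume fx: "f x \<in> P"
    show "x \<in> P"
    proof (rule ccontr)
      assume "x \<notin> P" hence "f x = x" using supp_fix[OF s] by blast
      thus False using fx \<open>x \<notin> P\<close> by simp
    qed
  next
    assume x: "x \<in> P"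
    show "f x \<in> P"
    proof (rule ccontr)
      assume nf: "f x \<notin> P" hence "f (f x) = f x" using supp_fix[OF s] by blast
      hence "f x = x" using b by (simp add: bij_def inj_eq)
      thus False using nf x by simp
    qed
  qed
qed

lemma commute_disj:
  assumes "bij f" "bij g" "supp f \<subseteq> P" "supp g \<subseteq> Q" "P \<inter> Q = {}"
  shows "f (g x) = g (f x)"
proof (cases "x \<in> P")
  case True
  hence "x \<notin> Q" using assms(5) by blast
  hence "g x = x" using supp_fix[OF assms(4)] by blast
  moreover have "f x \<in> P" using bij_supp_iff[OF assms(1) assms(3)] True by blast
  hence "g (f x) = f x" using supp_fix[OF assms(4)] assms(5) by blast
  ultimately show ?thesis by simp
next
  case False
  hence fx: "f x = x" using supp_fix[OF assms(3)] by blast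
  show ?thesis
  proof (cases "x \<in> Q")
    case True
    have "g x \<in> Q" using bij_supp_iff[OF assms(2) assms(4)] True by blast
    hence "f (g x) = g x" using supp_fix[OF assms(3)] assms(5) by blast
    thus ?thesis using fx by simp
  next
    case False
    hence "g x = x" using supp_fix[OF assms(4)] by blast
    thus ?thesis using fx by simp
  qed
qed

lemma supp_conj_sub:
  assumes "bij n" "supp g \<subseteq> W"
  shows "supp (n \<circ> g \<circ> hinv n) \<subseteq> n ` W"
proof
  fix y assume y: "y \<in> supp (n \<circ> g \<circ> hinv n)"
  show "y \<in> n ` W"
  proof (rule ccontr)
    assume ny: "y \<notin> n ` W"
    have "n (hinv n y) = y" using assms(1) by (simp add: bij_is_surj surj_f_inv_f)
    hence "hinv n y \<notin> W" using ny by (metis imageI)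
    hence "g (hinv n y) = hinv n y" using supp_fix[OF assms(2)] by blast
    hence "(n \<circ> g \<circ> hinv n) y = y" using \<open>n (hinv n y) = y\<close> by simp
    thus False using y by (simp add: supp_def)
  qed
qed

lemma KK_props:
  assumes "K \<in> KK D"
  shows "subgroup K homeo_group" "K \<noteq> {id}"
    "\<And>M. M \<lhd> homeo_group\<lparr>carrier := K\<rparr> \<Longrightarrow> M = {id} \<or> M = K"
    "\<And>g. g \<in> K \<Longrightarrow> supp g \<subseteq> D" "vigorous_over D K"
  using assms unfolding KK_def simple_homeo_subgroup_def by blast+

lemma homeo_hinv_f: "f \<in> Homeo \<Longrightarrow> hinv f (f x) = x"
  using homeo_bij by (simp add: bij_is_inj inv_f_f)
lemma homeo_f_hinv: "f \<in> Homeo \<Longrightarrow> f (hinv f x) = x"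
  using homeo_bij by (simp add: bij_is_surj surj_f_inv_f)

lemma absorb:
  assumes Ks: "K \<in> KK D" and Gm: "subgroup \<Gamma> homeo_group" "K \<subseteq> \<Gamma>"
    and N: "N \<subseteq> \<Gamma>" "id \<in> N" "\<And>f g. f \<in> N \<Longrightarrow> g \<in> N \<Longrightarrow> g \<circ> f \<in> N"
      "\<And>f. f \<in> N \<Longrightarrow> hinv f \<in> N" "\<And>x h. x \<in> \<Gamma> \<Longrightarrow> h \<in> N \<Longrightarrow> hinv x \<circ> h \<circ> x \<in> N"
    and n: "n \<in> N" "n p \<noteq> p" "p \<in> D" and D: "clopen_c D"
  shows "K \<subseteq> N"
proof -
  note KP = KK_props[OF Ks]
  note Kp = sub_props[OF KP(1)]
  note Gp = sub_props[OF Gm(1)]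
  have nH: "n \<in> Homeo" using n(1) N(1) Gp(1) by blast
  obtain W where W: "clopen_c W" "p \<in> W" "W \<subseteq> D" "n ` W \<inter> W = {}"
    using separate[OF nH n(2) n(3) D] by blast
  obtain W1 W2 where W12: "clopen_c W1" "clopen_c W2" "W1 \<noteq> {}" "W2 \<noteq> {}" "W1 \<inter> W2 = {}" "W1 \<union> W2 = W"
    using clopen_split[OF W(1)] W(2) by blast
  obtain W11 W12 where W1112: "clopen_c W11" "clopen_c W12" "W11 \<noteq> {}" "W12 \<noteq> {}" "W11 \<inter> W12 = {}" "W11 \<union> W12 = W1"
    using clopen_split[OF W12(1) W12(3)] by blast
  have gW: "good K W" using KP(5) W unfolding vigorous_good by blast
  have gW1: "good K W1" using KP(5) W W12 unfolding vigorous_good by blast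
  have a1: "W1 \<subseteq> W" "W1 \<noteq> W" "W2 \<subseteq> W" "W2 \<noteq> W" using W12 by blast+
  obtain g1 where g1: "g1 \<in> K" "supp g1 \<subseteq> W" "g1 ` W1 \<subseteq> W2"
    using goodD[OF gW W12(1) W12(3) a1(1) a1(2) W12(2) W12(4) a1(3) a1(4)] by blast
  have a2: "W11 \<subseteq> W1" "W11 \<noteq> W1" "W12 \<subseteq> W1" "W12 \<noteq> W1" using W1112 by blast+
  obtain g2 where g2: "g2 \<in> K" "supp g2 \<subseteq> W1" "g2 ` W11 \<subseteq> W12"
    using goodD[OF gW1 W1112(1) W1112(3) a2(1) a2(2) W1112(2) W1112(4) a2(3) a2(4)] by blast
  have g1H: "g1 \<in> Homeo" and g2H: "g2 \<in> Homeo" using g1(1) g2(1) Kp(1) by blast+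
  have g1G: "g1 \<in> \<Gamma>" and g2G: "g2 \<in> \<Gamma>" using g1(1) g2(1) Gm(2) by blast+
  have bn: "bij n" and bg1: "bij g1" and bg2: "bij g2" using nH g1H g2H homeo_bij by blast+
  define s where "s = n \<circ> g1 \<circ> hinv n"
  have bs: "bij s" unfolding s_def using bn bg1 by (intro bij_comp bij_imp_bij_inv)
  have ss: "supp s \<subseteq> n ` W" unfolding s_def by (rule supp_conj_sub[OF bn g1(2)])
  have sg2: "\<And>y. s (g2 y) = g2 (s y)"
  proof -
    fix y
    have "supp g2 \<subseteq> W" using g2(2) a1(1) by blast
    thus "s (g2 y) = g2 (s y)" by (rule commute_disj[OF bs bg2 ss _ W(4)])
  qed
  have sinv: "\<And>y. s (hinv s y) = y" using bs by (simp add: bij_is_surj surj_f_inv_f)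
  define c1 where "c1 = hinv g1 \<circ> n \<circ> g1 \<circ> hinv n"
  have c1N: "c1 \<in> N" unfolding c1_def by (rule N(3)[OF N(4)[OF n(1)] N(5)[OF g1G n(1)]])
  have c1s: "c1 = hinv g1 \<circ> s" unfolding c1_def s_def by (simp add: comp_assoc)
  have c1inv: "hinv c1 = hinv s \<circ> g1"
  proof -
    have "hinv c1 = hinv s \<circ> hinv (hinv g1)" unfolding c1s
      by (rule o_inv_distrib[OF bij_imp_bij_inv[OF bg1] bs])
    thus ?thesis using inv_inv_eq[OF bg1] by simp
  qed
  define c2 where "c2 = hinv g2 \<circ> c1 \<circ> g2 \<circ> hinv c1"
  have c2N: "c2 \<in> N" unfolding c2_def by (rule N(3)[OF N(4)[OF c1N] N(5)[OF g2G c1N]])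
  define d where "d = hinv g2 \<circ> hinv g1 \<circ> g2 \<circ> g1"
  have c2d: "c2 = d"
  proof (rule ext)
    fix x
    have "c2 x = hinv g2 (hinv g1 (s (g2 (hinv s (g1 x)))))"
      unfolding c2_def c1inv by (simp add: c1s)
    also have "\<dots> = hinv g2 (hinv g1 (g2 (g1 x)))" by (simp only: sg2 sinv)
    also have "\<dots> = d x" by (simp add: d_def)
    finally show "c2 x = d x" .
  qed
  have dK: "d \<in> K" unfolding d_def
    by (intro Kp(3) Kp(4) g1(1) g2(1))
  have dnid: "d \<noteq> id"
  proof
    assume did: "d = id"
    obtain x where x: "x \<in> W11" using W1112(3) by blast
    have "hinv g2 (hinv g1 (g2 (g1 x))) = x" using did unfolding d_def by (metis comp_apply id_apply)
    hence "g2 (g1 x) = g1 (g2 x)" by (metis homeo_f_hinv g1H g2H)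
    moreover have "g1 x \<in> W2" using g1(3) x a2(1) by blast
    hence "g2 (g1 x) = g1 x" using supp_fix[OF g2(2)] W12(5) by blast
    ultimately have "g1 x = g1 (g2 x)" by simp
    hence "x = g2 x" using bg1 by (simp add: bij_def inj_eq)
    moreover have "g2 x \<in> W12" by (rule subsetD[OF g2(3) imageI[OF x]])
    ultimately have "x \<in> W12" by simp
    thus False using x W1112(5) by blast
  qed
  define M where "M = N \<inter> K"
  have "M \<lhd> homeo_group\<lparr>carrier := K\<rparr>"
  proof (rule normal_intro[OF KP(1)])
    show "M \<subseteq> K" unfolding M_def by blast
    show "id \<in> M" unfolding M_def using N(2) Kp(2) by blast
    show "\<And>f g. f \<in> M \<Longrightarrow> g \<in> M \<Longrightarrow> g \<circ> f \<in> M" unfolding M_def using N(3) Kp(3) by blast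
    show "\<And>f. f \<in> M \<Longrightarrow> hinv f \<in> M" unfolding M_def using N(4) Kp(4) by blast
    show "\<And>x h. x \<in> K \<Longrightarrow> h \<in> M \<Longrightarrow> hinv x \<circ> h \<circ> x \<in> M"
    proof -
      fix x h assume x: "x \<in> K" and h: "h \<in> M"
      have "hinv x \<circ> h \<circ> x \<in> N" using N(5) x h Gm(2) unfolding M_def by blast
      moreover have "hinv x \<circ> h \<circ> x \<in> K" using x h unfolding M_def by (intro Kp(3) Kp(4)) auto
      ultimately show "hinv x \<circ> h \<circ> x \<in> M" unfolding M_def by blast
    qed
  qed
  hence "M = {id} \<or> M = K" by (rule KP(3))
  moreover have "d \<in> M" unfolding M_def using dK c2N c2d by blast
  ultimately have "M = K" using dnid by blast
  thus ?thesis unfolding M_def by blast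
qed



lemma supp_hinv: "f \<in> Homeo \<Longrightarrow> supp (hinv f) = supp f"
proof -
  assume f: "f \<in> Homeo"
  have "\<And>p. hinv f p = p \<longleftrightarrow> f p = p"
    by (metis f homeo_f_hinv homeo_hinv_f)
  thus ?thesis unfolding supp_def by blast
qed

lemma good_conj:
  assumes S: "S \<subseteq> Homeo" "\<And>f g. f \<in> S \<Longrightarrow> g \<in> S \<Longrightarrow> g \<circ> f \<in> S" "\<And>f. f \<in> S \<Longrightarrow> hinv f \<in> S"
    and a: "\<alpha> \<in> S" and g: "good S (\<alpha> ` A)"
  shows "good S A"
  unfolding good_def
proof (intro allI impI)
  fix B C assume BC: "clopen_c B \<and> B \<noteq> {} \<and> B \<subseteq> A \<and> B \<noteq> A \<and>
           clopen_c C \<and> C \<noteq> {} \<and> C \<subseteq> A \<and> C \<noteq> A"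
  have aH: "\<alpha> \<in> Homeo" using a S(1) by blast
  have ia: "inj \<alpha>" using homeo_bij[OF aH] bij_is_inj by blast
  have B': "clopen_c (\<alpha> ` B)" "\<alpha> ` B \<noteq> {}" "\<alpha> ` B \<subseteq> \<alpha> ` A" "\<alpha> ` B \<noteq> \<alpha> ` A"
    using BC clopen_c_image[OF aH] inj_image_eq_iff[OF ia] by blast+
  have C': "clopen_c (\<alpha> ` C)" "\<alpha> ` C \<noteq> {}" "\<alpha> ` C \<subseteq> \<alpha> ` A" "\<alpha> ` C \<noteq> \<alpha> ` A"
    using BC clopen_c_image[OF aH] inj_image_eq_iff[OF ia] by blast+
  obtain \<beta> where b: "\<beta> \<in> S" "supp \<beta> \<subseteq> \<alpha> ` A" "\<beta> ` \<alpha> ` B \<subseteq> \<alpha> ` C"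
    using goodD[OF g B' C'] by blast
  define \<gamma> where "\<gamma> = hinv \<alpha> \<circ> \<beta> \<circ> \<alpha>"
  have gS: "\<gamma> \<in> S" unfolding \<gamma>_def by (rule S(2)[OF a S(2)[OF b(1) S(3)[OF a]]])
  have "supp \<gamma> \<subseteq> A"
  proof
    fix x assume x: "x \<in> supp \<gamma>"
    show "x \<in> A"
    proof (rule ccontr)
      assume "x \<notin> A"
      hence "\<alpha> x \<notin> \<alpha> ` A" using ia by (simp add: inj_image_mem_iff)
      hence "\<beta> (\<alpha> x) = \<alpha> x" using supp_fix[OF b(2)] by blast
      hence "\<gamma> x = x" unfolding \<gamma>_def using homeo_hinv_f[OF aH] by simp
      thus False using x by (simp add: supp_def)
    qed
  qed
  moreover have "\<gamma> ` B \<subseteq> C"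
  proof
    fix y assume "y \<in> \<gamma> ` B"
    then obtain b0 where b0: "b0 \<in> B" "y = \<gamma> b0" by blast
    have "\<beta> (\<alpha> b0) \<in> \<alpha> ` C" using b(3) b0(1) by blast
    then obtain c where c: "c \<in> C" "\<beta> (\<alpha> b0) = \<alpha> c" by blast
    have "y = c" unfolding b0(2) \<gamma>_def using c(2) homeo_hinv_f[OF aH] by simp
    thus "y \<in> C" using c(1) by simp
  qed
  ultimately show "\<exists>\<gamma>\<in>S. supp \<gamma> \<subseteq> A \<and> \<gamma> ` B \<subseteq> C" using gS by blast
qed

lemma mover:
  assumes "K \<in> KK D" "clopen_c E" "E \<noteq> {}" "E \<subseteq> D"
  shows "\<exists>g\<in>K. \<exists>q\<in>E. g q \<noteq> q"
proof -
  obtain E1 E2 where E: "clopen_c E1" "clopen_c E2" "E1 \<noteq> {}" "E2 \<noteq> {}" "E1 \<inter> E2 = {}" "E1 \<union> E2 = E"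
    using clopen_split[OF assms(2,3)] by blast
  have gE: "good K E" using KK_props(5)[OF assms(1)] assms(2-4) unfolding vigorous_good by blast
  have a: "E1 \<subseteq> E" "E1 \<noteq> E" "E2 \<subseteq> E" "E2 \<noteq> E" using E by blast+
  obtain g where g: "g \<in> K" "g ` E1 \<subseteq> E2"
    using goodD[OF gE E(1) E(3) a(1) a(2) E(2) E(4) a(3) a(4)] by blast
  obtain q where q: "q \<in> E1" using E(3) by auto
  have gq: "g q \<in> g ` E1" using q by (rule imageI)
  have gq2: "g q \<in> E2" using g(2) gq by (rule subsetD)
  have "g q \<noteq> q"
  proof
    assume "g q = q"
    hence "q \<in> E2" using gq2 by simp
    thus False using q E(5) by blast
  qed
  thus ?thesis using g(1) q a(1) by blast
qed

lemma both:
  assumes K1: "K1 \<in> KK D1" "K1 \<subseteq> N" and K2: "K2 \<in> KK D2"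
    and D: "clopen_c D1" "clopen_c D2" "D1 \<inter> D2 \<noteq> {}"
    and Gm: "subgroup \<Gamma> homeo_group" "K2 \<subseteq> \<Gamma>"
    and N: "N \<subseteq> \<Gamma>" "id \<in> N" "\<And>f g. f \<in> N \<Longrightarrow> g \<in> N \<Longrightarrow> g \<circ> f \<in> N"
      "\<And>f. f \<in> N \<Longrightarrow> hinv f \<in> N" "\<And>x h. x \<in> \<Gamma> \<Longrightarrow> h \<in> N \<Longrightarrow> hinv x \<circ> h \<circ> x \<in> N"
  shows "K2 \<subseteq> N"
proof -
  obtain g q where gq: "g \<in> K1" "q \<in> D1 \<inter> D2" "g q \<noteq> q"
    using mover[OF K1(1) clopen_c_Int[OF D(1) D(2)] D(3)] by blast
  have gN: "g \<in> N" using gq(1) K1(2) by blast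
  have qD: "q \<in> D2" using gq(2) by blast
  show ?thesis by (rule absorb[OF K2 Gm N gN gq(3) qD D(2)])
qed

theorem proposition2p16:
  assumes "U \<in> K_C" and "V \<in> K_C" and "U \<inter> V \<noteq> {}"
    and "G \<in> KK U" and "H \<in> KK V"
  shows "generate homeo_group (G \<union> H) \<in> KK (U \<union> V)
    \<and> (fin_gen G \<and> fin_gen H \<longrightarrow> generate homeo_group (G \<union> H) \<in> KK_fg (U \<union> V))"
proof -
  define \<Gamma> where "\<Gamma> = generate homeo_group (G \<union> H)"
  note GP = KK_props[OF assms(4)]
  note HP = KK_props[OF assms(5)]
  have Uc: "clopen_c U" and Vc: "clopen_c V" using assms(1,2) unfolding K_C_def by blast+
  have GHH: "G \<union> H \<subseteq> Homeo" using sub_props(1)[OF GP(1)] sub_props(1)[OF HP(1)] by blast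
  have GHc: "G \<union> H \<subseteq> carrier homeo_group" using GHH by (simp only: hg_carrier)
  have Gm: "subgroup \<Gamma> homeo_group" unfolding \<Gamma>_def
    by (rule group.generate_is_subgroup[OF group_homeo GHc])
  note Gp = sub_props[OF Gm]
  have GG: "G \<subseteq> \<Gamma>" unfolding \<Gamma>_def by (intro subsetI generate.incl UnI1)
  have HG: "H \<subseteq> \<Gamma>" unfolding \<Gamma>_def by (intro subsetI generate.incl UnI2)
  have supps: "\<And>x. x \<in> \<Gamma> \<Longrightarrow> supp x \<subseteq> U \<union> V"
  proof -
    fix x assume x: "x \<in> \<Gamma>"
    show "supp x \<subseteq> U \<union> V"
    proof (rule gen_prop[OF x[unfolded \<Gamma>_def] GHH])
      show "supp id \<subseteq> U \<union> V" by (simp add: supp_id)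
      show "\<And>h. h \<in> G \<union> H \<Longrightarrow> supp h \<subseteq> U \<union> V" using GP(4) HP(4) by blast
      show "\<And>h. h \<in> G \<union> H \<Longrightarrow> supp (hinv h) \<subseteq> U \<union> V"
        using GP(4) HP(4) supp_hinv GHH by blast
      show "\<And>f g. supp f \<subseteq> U \<union> V \<Longrightarrow> supp g \<subseteq> U \<union> V \<Longrightarrow> supp (g \<circ> f) \<subseteq> U \<union> V"
        using supp_comp by blast
    qed
  qed
  have nontriv: "\<Gamma> \<noteq> {id}"
  proof
    assume "\<Gamma> = {id}"
    hence "G \<subseteq> {id}" using GG by simp
    moreover have "id \<in> G" using sub_props(2)[OF GP(1)] .
    ultimately show False using GP(2) by blast
  qed
  have simple: "\<And>N. N \<lhd> homeo_group\<lparr>carrier := \<Gamma>\<rparr> \<Longrightarrow> N = {id} \<or> N = \<Gamma>"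
  proof -
    fix N assume Nn: "N \<lhd> homeo_group\<lparr>carrier := \<Gamma>\<rparr>"
    note NP0 = normal_props[OF Gm Nn]
    note NP = restr_sub_props[OF Gm NP0(1)]
    show "N = {id} \<or> N = \<Gamma>"
    proof (cases "N = {id}")
      case True thus ?thesis by simp
    next
      case False
      then obtain n where n: "n \<in> N" "n \<noteq> id" using NP(2) by blast
      then obtain p where p: "n p \<noteq> p" by (metis eq_id_iff)
      have "p \<in> supp n" using p by (simp add: supp_def)
      hence pUV: "p \<in> U \<or> p \<in> V" using supps[of n] n(1) NP(1) by blast
      have GN: "G \<subseteq> N \<and> H \<subseteq> N"
      proof (cases "p \<in> U")
        case True
        have "G \<subseteq> N" using absorb[OF assms(4) Gm GG NP NP0(2) n(1) p True Uc] .
        moreover have "H \<subseteq> N" using both[OF assms(4) \<open>G \<subseteq> N\<close> assms(5) Uc Vc assms(3) Gm HG NP NP0(2)] .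
        ultimately show ?thesis by blast
      next
        case False
        hence pV: "p \<in> V" using pUV by blast
        have "H \<subseteq> N" using absorb[OF assms(5) Gm HG NP NP0(2) n(1) p pV Vc] .
        moreover have "V \<inter> U \<noteq> {}" using assms(3) by blast
        hence "G \<subseteq> N" using both[OF assms(5) \<open>H \<subseteq> N\<close> assms(4) Vc Uc _ Gm GG NP NP0(2)] by blast
        ultimately show ?thesis using \<open>H \<subseteq> N\<close> by blast
      qed
      have "\<Gamma> \<subseteq> N"
      proof
        fix x assume x: "x \<in> \<Gamma>"
        show "x \<in> N"
        proof (rule gen_prop[OF x[unfolded \<Gamma>_def] GHH])
          show "id \<in> N" by (rule NP(2))
          show "\<And>h. h \<in> G \<union> H \<Longrightarrow> h \<in> N" using GN by blast
          show "\<And>h. h \<in> G \<union> H \<Longrightarrow> hinv h \<in> N" using GN NP(4) by blast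
          show "\<And>f g. f \<in> N \<Longrightarrow> g \<in> N \<Longrightarrow> g \<circ> f \<in> N" by (rule NP(3))
        qed
      qed
      thus ?thesis using NP(1) by blast
    qed
  qed
  have goodU: "\<And>A. clopen_c A \<Longrightarrow> A \<noteq> {} \<Longrightarrow> A \<subseteq> U \<Longrightarrow> good \<Gamma> A"
    using GP(5) GG good_mono unfolding vigorous_good by blast
  have goodV: "\<And>A. clopen_c A \<Longrightarrow> A \<noteq> {} \<Longrightarrow> A \<subseteq> V \<Longrightarrow> good \<Gamma> A"
    using HP(5) GG HG good_mono unfolding vigorous_good by blast
  have twow: "\<And>A. clopen_c A \<Longrightarrow> A \<subseteq> U \<union> V \<Longrightarrow> A \<inter> U \<inter> V \<noteq> {} \<Longrightarrow> good \<Gamma> A"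
  proof -
    fix A assume A: "clopen_c A" "A \<subseteq> U \<union> V" "A \<inter> U \<inter> V \<noteq> {}"
    have c1: "clopen_c (A \<inter> U)" and c2: "clopen_c (A \<inter> V)" using A(1) Uc Vc clopen_c_Int by blast+
    have g1: "good \<Gamma> (A \<inter> U)" using goodU[OF c1] A(3) by blast
    have g2: "good \<Gamma> (A \<inter> V)" using goodV[OF c2] A(3) by blast
    have "(A \<inter> U) \<inter> (A \<inter> V) \<noteq> {}" using A(3) by blast
    note w = windows[OF Gp(1) Gp(2) Gp(3) g1 g2 c1 c2 this]
    hence "good \<Gamma> ((A \<inter> U) \<union> (A \<inter> V))" by simp
    moreover have "(A \<inter> U) \<union> (A \<inter> V) = A" using A(2) by blast
    ultimately show "good \<Gamma> A" by simp
  qed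
  have vig: "vigorous_over (U \<union> V) \<Gamma>"
    unfolding vigorous_good
  proof (intro allI impI)
    fix A assume A: "clopen_c A \<and> A \<noteq> {} \<and> A \<subseteq> U \<union> V"
    show "good \<Gamma> A"
    proof (cases "A \<subseteq> U")
      case True thus ?thesis using goodU A by blast
    next
      case nU: False
      show ?thesis
      proof (cases "A \<subseteq> V")
        case True thus ?thesis using goodV A by blast
      next
        case nV: False
        show ?thesis
        proof (cases "A \<inter> U \<inter> V = {}")
          case False thus ?thesis using twow A by blast
        next
          case empt: True
          have AU: "A \<inter> U \<noteq> {}" using nV A by blast
          have gUU: "good G U" using GP(5) Uc assms(1) unfolding vigorous_good K_C_def by blast
          have cAU: "clopen_c (A \<inter> U)" using A Uc clopen_c_Int by blast
          have cUV: "clopen_c (U \<inter> V)" using Uc Vc clopen_c_Int by blast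
          have n1: "A \<inter> U \<noteq> U" using empt assms(3) by blast
          have n2: "U \<inter> V \<noteq> U" using empt AU by blast
          obtain g where g: "g \<in> G" "supp g \<subseteq> U" "g ` (A \<inter> U) \<subseteq> U \<inter> V"
            using goodD[OF gUU cAU AU Int_lower2 n1 cUV assms(3) Int_lower1 n2] by blast
          have gG: "g \<in> \<Gamma>" using g(1) GG by blast
          have gH: "g \<in> Homeo" using gG Gp(1) by blast
          have cgA: "clopen_c (g ` A)" using clopen_c_image[OF gH] A by blast
          have sub: "g ` A \<subseteq> U \<union> V"
          proof
            fix y assume "y \<in> g ` A"
            then obtain x where x: "x \<in> A" "y = g x" by blast
            show "y \<in> U \<union> V"
            proof (cases "x \<in> U")
              case True thus ?thesis using g(3) x by blast
            next
              case False thus ?thesis using supp_fix[OF g(2) False] x A by auto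
            qed
          qed
          have ne: "g ` A \<inter> U \<inter> V \<noteq> {}" using g(3) AU by blast
          have "good \<Gamma> (g ` A)" by (rule twow[OF cgA sub ne])
          from good_conj[OF Gp(1) Gp(3) Gp(4) gG this] show ?thesis .
        qed
      qed
    qed
  qed
  have KK: "\<Gamma> \<in> KK (U \<union> V)"
    unfolding KK_def simple_homeo_subgroup_def using Gm nontriv simple supps vig by blast
  have fg: "fin_gen G \<and> fin_gen H \<longrightarrow> \<Gamma> \<in> KK_fg (U \<union> V)"
  proof
    assume "fin_gen G \<and> fin_gen H"
    then obtain F1 F2 where F1: "finite F1" "F1 \<subseteq> G" "generate homeo_group F1 = G"
      and F2: "finite F2" "F2 \<subseteq> H" "generate homeo_group F2 = H"
      unfolding fin_gen_def by blast
    define F where "F = F1 \<union> F2"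
    have FH: "F \<subseteq> Homeo" using F1(2) F2(2) GHH unfolding F_def by blast
    have FG: "F \<subseteq> \<Gamma>" using F1(2) F2(2) GG HG unfolding F_def by blast
    have FHc: "F \<subseteq> carrier homeo_group" using FH by (simp only: hg_carrier)
    have Fm: "subgroup (generate homeo_group F) homeo_group"
      by (rule group.generate_is_subgroup[OF group_homeo FHc])
    note Fp = sub_props[OF Fm]
    have "G \<subseteq> generate homeo_group F"
      using group.mono_generate[OF group_homeo, of F1 F] F1(3) unfolding F_def by blast
    moreover have "H \<subseteq> generate homeo_group F"
      using group.mono_generate[OF group_homeo, of F2 F] F2(3) unfolding F_def by blast
    ultimately have GHF: "G \<union> H \<subseteq> generate homeo_group F" by blast
    have "generate homeo_group F = \<Gamma>"
    proof
      show "generate homeo_group F \<subseteq> \<Gamma>"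
      proof
        fix x assume x: "x \<in> generate homeo_group F"
        show "x \<in> \<Gamma>"
        proof (rule gen_prop[OF x FH])
          show "id \<in> \<Gamma>" by (rule Gp(2))
          show "\<And>h. h \<in> F \<Longrightarrow> h \<in> \<Gamma>" using FG by blast
          show "\<And>h. h \<in> F \<Longrightarrow> hinv h \<in> \<Gamma>" using FG Gp(4) by blast
          show "\<And>f g. f \<in> \<Gamma> \<Longrightarrow> g \<in> \<Gamma> \<Longrightarrow> g \<circ> f \<in> \<Gamma>" by (rule Gp(3))
        qed
      qed
      show "\<Gamma> \<subseteq> generate homeo_group F"
      proof
        fix x assume x: "x \<in> \<Gamma>"
        show "x \<in> generate homeo_group F"
        proof (rule gen_prop[OF x[unfolded \<Gamma>_def] GHH])
          show "id \<in> generate homeo_group F" by (rule Fp(2))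
          show "\<And>h. h \<in> G \<union> H \<Longrightarrow> h \<in> generate homeo_group F" using GHF by blast
          show "\<And>h. h \<in> G \<union> H \<Longrightarrow> hinv h \<in> generate homeo_group F" using GHF Fp(4) by blast
          show "\<And>f g. f \<in> generate homeo_group F \<Longrightarrow> g \<in> generate homeo_group F \<Longrightarrow> g \<circ> f \<in> generate homeo_group F"
            by (rule Fp(3))
        qed
      qed
    qed
    hence "fin_gen \<Gamma>" unfolding fin_gen_def using F1(1) F2(1) FG unfolding F_def by blast
    thus "\<Gamma> \<in> KK_fg (U \<union> V)" unfolding KK_fg_def using KK by blast
  qed
  show ?thesis using KK fg unfolding \<Gamma>_def by blast
qed


end
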